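(* Let $(E,\rho)$ be a complete partial $b_v(s)$ metric space and let $S:E\to E$ satisfy $\rho(Su,Sw)\le\lambda\rho(u,w)$ for all $u,w\in E$, where $\lambda\in[0,1)$. Then $S$ has a unique fixed point $b\in E$, and $\rho(b,b)=0$.
   Context: Let $E$ be a nonempty set and $v\in\mathbb{N}$. $(E,\rho)$, with $\rho:E\times E\to[0,\infty)$, is a partial $b_v(s)$ metric space if there is a real $s\ge1$ such that for all $u,w,z_1,\dots,z_v\in E$: (1) $u=w$ iff $\rho(u,u)=\rho(u,w)=\rho(w,w)$; (2) $\rho(u,u)\le\rho(u,w)$; (3) $\rho(u,w)=\rho(w,u)$; (4) $\rho(u,w)\le s[\rho(u,z_1)+\rho(z_1,z_2)+\dots+\rho(z_{v-1},z_v)+\rho(z_v,w)]-\sum_{i=1}^v\rho(z_i,z_i)$. A sequence $\{u_n\}$ in $E$ converges to $u\in E$ if $\lim_{n\to\infty}\rho(u_n,u)=\rho(u,u)$; it is Cauchy if $\lim_{n,m\to\infty}\rho(u_n,u_m)$ exists and is finite. $(E,\rho)$ is complete if for every Cauchy sequence $\{u_n\}$ there is $u\in E$ with $\lim_{n,m\to\infty}\rho(u_n,u_m)=\lim_{n\to\infty}\rho(u_n,u)=\rho(u,u)$. *)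

theory Defs
  imports "HOL-Analysis.Analysis"
begin

definition partial_bv_metric :: "'a set \<Rightarrow> ('a \<Rightarrow> 'a \<Rightarrow> real) \<Rightarrow> nat \<Rightarrow> real \<Rightarrow> bool" where
  "partial_bv_metric E \<rho> v s \<longleftrightarrow>
     E \<noteq> {} \<and> v \<ge> 1 \<and> s \<ge> 1 \<and>
     (\<forall>u\<in>E. \<forall>w\<in>E. \<rho> u w \<ge> 0) \<and>
     (\<forall>u\<in>E. \<forall>w\<in>E. u = w \<longleftrightarrow> (\<rho> u u = \<rho> u w \<and> \<rho> u w = \<rho> w w)) \<and>
     (\<forall>u\<in>E. \<forall>w\<in>E. \<rho> u u \<le> \<rho> u w) \<and>
     (\<forall>u\<in>E. \<forall>w\<in>E. \<rho> u w = \<rho> w u) \<and>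
     (\<forall>u\<in>E. \<forall>w\<in>E. \<forall>z. (\<forall>i\<in>{1..v}. z i \<in> E) \<longrightarrow>
        \<rho> u w \<le> s * (\<rho> u (z 1) + (\<Sum>i=1..<v. \<rho> (z i) (z (Suc i))) + \<rho> (z v) w)
                   - (\<Sum>i=1..v. \<rho> (z i) (z i)))"

definition pbv_converges :: "('a \<Rightarrow> 'a \<Rightarrow> real) \<Rightarrow> (nat \<Rightarrow> 'a) \<Rightarrow> 'a \<Rightarrow> bool" where
  "pbv_converges \<rho> x u \<longleftrightarrow> ((\<lambda>n. \<rho> (x n) u) \<longlonglongrightarrow> \<rho> u u)"

definition pbv_cauchy :: "('a \<Rightarrow> 'a \<Rightarrow> real) \<Rightarrow> (nat \<Rightarrow> 'a) \<Rightarrow> bool" where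
  "pbv_cauchy \<rho> x \<longleftrightarrow>
     (\<exists>L::real. ((\<lambda>(n, m). \<rho> (x n) (x m)) \<longlongrightarrow> L) (sequentially \<times>\<^sub>F sequentially))"

definition pbv_complete :: "'a set \<Rightarrow> ('a \<Rightarrow> 'a \<Rightarrow> real) \<Rightarrow> bool" where
  "pbv_complete E \<rho> \<longleftrightarrow>
     (\<forall>x. (\<forall>n. x n \<in> E) \<longrightarrow> pbv_cauchy \<rho> x \<longrightarrow>
        (\<exists>u\<in>E. ((\<lambda>(n, m). \<rho> (x n) (x m)) \<longlongrightarrow> \<rho> u u) (sequentially \<times>\<^sub>F sequentially)
              \<and> pbv_converges \<rho> x u))"

end

theory Submission
  imports Defs
begin

lemma pbv_tri2:
  assumes P: "partial_bv_metric E \<rho> v s" and u: "u \<in> E" and a: "a \<in> E" and w: "w \<in> E"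
  shows "\<rho> u w \<le> (s * v) * (\<rho> u a + \<rho> a w)"
proof -
  have v1: "v \<ge> 1" and s1: "s \<ge> 1" using P unfolding partial_bv_metric_def by auto
  have nn: "\<And>x y. x \<in> E \<Longrightarrow> y \<in> E \<Longrightarrow> \<rho> x y \<ge> 0" using P unfolding partial_bv_metric_def by auto
  have sm: "\<rho> a a \<le> \<rho> a w" using P a w unfolding partial_bv_metric_def by auto
  have tri: "\<rho> u w \<le> s * (\<rho> u ((\<lambda>i. a) 1) + (\<Sum>i=1..<v. \<rho> ((\<lambda>i. a) i) ((\<lambda>i. a) (Suc i))) + \<rho> ((\<lambda>i. a) v) w)
                   - (\<Sum>i=1..v. \<rho> ((\<lambda>i. a) i) ((\<lambda>i. a) i))"
  proof -
    have H: "\<forall>u\<in>E. \<forall>w\<in>E. \<forall>z. (\<forall>i\<in>{1..v}. z i \<in> E) \<longrightarrow>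
        \<rho> u w \<le> s * (\<rho> u (z 1) + (\<Sum>i=1..<v. \<rho> (z i) (z (Suc i))) + \<rho> (z v) w)
                   - (\<Sum>i=1..v. \<rho> (z i) (z i))" using P unfolding partial_bv_metric_def by blast
    show ?thesis using H[rule_format, OF u w, of "\<lambda>i. a"] a by blast
  qed
  have s2: "(\<Sum>i=1..v. \<rho> ((\<lambda>i. a) i) ((\<lambda>i. a) i)) \<ge> 0" using nn[OF a a] by (simp add: sum_nonneg)
  have s3: "(\<Sum>i=1..<v. \<rho> ((\<lambda>i. a) i) ((\<lambda>i. a) (Suc i))) = real (v - 1) * \<rho> a a" by simp
  have "real (v-1) * \<rho> a a \<le> real (v-1) * \<rho> a w" using sm by (simp add: mult_left_mono)
  hence "\<rho> u w \<le> s * (\<rho> u a + real (v-1) * \<rho> a w + \<rho> a w)" using tri s2 s3 s1 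
    by (smt (verit, best) mult_left_mono)
  also have "\<rho> u a + real (v-1) * \<rho> a w + \<rho> a w = \<rho> u a + real v * \<rho> a w"
    using v1 by (simp add: of_nat_diff algebra_simps)
  also have "\<dots> \<le> real v * (\<rho> u a + \<rho> a w)"
  proof -
    have vr: "1 \<le> real v" using v1 by simp
    have "\<rho> u a \<le> real v * \<rho> u a" using mult_right_mono[OF vr nn[OF u a]] by simp
    thus ?thesis by (simp add: algebra_simps)
  qed
  finally show ?thesis using s1 by (smt (verit) mult.assoc mult_left_mono)
qed

lemma pbv_tri3:
  assumes P: "partial_bv_metric E \<rho> v s" and u: "u \<in> E" and a: "a \<in> E" and b: "b \<in> E" and w: "w \<in> E"
  shows "\<rho> u w \<le> (s * v)^2 * (\<rho> u a + \<rho> a b + \<rho> b w)"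
proof -
  have v1: "v \<ge> 1" and s1: "s \<ge> 1" using P unfolding partial_bv_metric_def by auto
  have sv: "s * v \<ge> 1" using v1 s1 by (metis mult_mono' of_nat_1 of_nat_le_iff mult_1_right zero_le_one)
  have nn: "\<And>x y. x \<in> E \<Longrightarrow> y \<in> E \<Longrightarrow> \<rho> x y \<ge> 0" using P unfolding partial_bv_metric_def by auto
  have h1: "\<rho> u w \<le> (s * v) * (\<rho> u a + \<rho> a w)" using pbv_tri2[OF P u a w] .
  have h2: "\<rho> a w \<le> (s * v) * (\<rho> a b + \<rho> b w)" using pbv_tri2[OF P a b w] .
  have "\<rho> u a \<le> (s * v) * \<rho> u a" using mult_right_mono[OF sv nn[OF u a]] by simp
  hence "\<rho> u a + \<rho> a w \<le> (s * v) * (\<rho> u a + \<rho> a b + \<rho> b w)" using h2 by (simp add: algebra_simps)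
  hence "(s * v) * (\<rho> u a + \<rho> a w) \<le> (s * v) * ((s * v) * (\<rho> u a + \<rho> a b + \<rho> b w))"
    using sv by (intro mult_left_mono) auto
  thus ?thesis using h1 by (simp add: power2_eq_square mult.assoc)
qed

theorem mainTheorem2:
  fixes E :: "'a set" and \<rho> :: "'a \<Rightarrow> 'a \<Rightarrow> real" and v :: nat and s lam :: real
    and S :: "'a \<Rightarrow> 'a"
  assumes "partial_bv_metric E \<rho> v s"
    and "pbv_complete E \<rho>"
    and "\<forall>u\<in>E. S u \<in> E"
    and "0 \<le> lam" and "lam < 1"
    and "\<forall>u\<in>E. \<forall>w\<in>E. \<rho> (S u) (S w) \<le> lam * \<rho> u w"
  shows "\<exists>b\<in>E. S b = b \<and> \<rho> b b = 0 \<and> (\<forall>c\<in>E. S c = c \<longrightarrow> c = b)"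
proof -
  note P = assms(1)
  have nn: "\<And>x y. x \<in> E \<Longrightarrow> y \<in> E \<Longrightarrow> \<rho> x y \<ge> 0" using P unfolding partial_bv_metric_def by auto
  have sym: "\<And>x y. x \<in> E \<Longrightarrow> y \<in> E \<Longrightarrow> \<rho> x y = \<rho> y x" using P unfolding partial_bv_metric_def by auto
  have sm: "\<And>x y. x \<in> E \<Longrightarrow> y \<in> E \<Longrightarrow> \<rho> x x \<le> \<rho> x y" using P unfolding partial_bv_metric_def by auto
  have eqI: "\<And>x y. x \<in> E \<Longrightarrow> y \<in> E \<Longrightarrow> \<rho> x x = \<rho> x y \<Longrightarrow> \<rho> x y = \<rho> y y \<Longrightarrow> x = y"
    using P unfolding partial_bv_metric_def by auto
  have v1: "v \<ge> 1" and s1: "s \<ge> 1" and Ene: "E \<noteq> {}" using P unfolding partial_bv_metric_def by auto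
  have SE: "\<And>u. u \<in> E \<Longrightarrow> S u \<in> E" using assms(3) by auto
  have con: "\<And>u w. u \<in> E \<Longrightarrow> w \<in> E \<Longrightarrow> \<rho> (S u) (S w) \<le> lam * \<rho> u w" using assms(6) by auto
  obtain x0 where x0: "x0 \<in> E" using Ene by auto
  define x where "x n = (S ^^ n) x0" for n
  have xS: "x (Suc n) = S (x n)" for n by (simp add: x_def)
  have xE: "x n \<in> E" for n by (induction n) (auto simp: x_def x0 SE)
  have shift: "\<rho> (x (n+i)) (x (m+i)) \<le> lam^i * \<rho> (x n) (x m)" for n m i
  proof (induction i)
    case 0 then show ?case by simp
  next
    case (Suc i)
    have "\<rho> (x (n + Suc i)) (x (m + Suc i)) \<le> lam * \<rho> (x (n+i)) (x (m+i))"
      using con[OF xE xE] by (simp add: xS)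
    also have "\<dots> \<le> lam * (lam^i * \<rho> (x n) (x m))" using Suc assms(4) by (intro mult_left_mono) auto
    finally show ?case by (simp add: mult.assoc)
  qed
  define K where "K = (s * v)^2"
  have K1: "K \<ge> 1" unfolding K_def using v1 s1
    by (metis mult_mono' of_nat_1 of_nat_le_iff mult_1_right zero_le_one one_le_power)
  have tri3: "\<And>u a b w. u \<in> E \<Longrightarrow> a \<in> E \<Longrightarrow> b \<in> E \<Longrightarrow> w \<in> E \<Longrightarrow> \<rho> u w \<le> K * (\<rho> u a + \<rho> a b + \<rho> b w)"
    unfolding K_def using pbv_tri3[OF P] by blast
  have lp: "(\<lambda>n. lam ^ n) \<longlonglongrightarrow> 0" using assms(4,5) by (intro LIMSEQ_power_zero) auto
  have "(\<lambda>n. K * lam ^ n) \<longlonglongrightarrow> K * 0" by (intro tendsto_mult lp tendsto_const)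
  hence "eventually (\<lambda>n. K * lam ^ n < 1) sequentially" by (intro order_tendstoD) auto
  then obtain k where k: "K * lam ^ k < 1" by (auto simp: eventually_sequentially)
  define C where "C = \<rho> (x 0) (x k)"
  define M where "M = 2 * K * C / (1 - K * lam ^ k)"
  have C0: "C \<ge> 0" unfolding C_def using nn xE by auto
  have bound: "\<rho> (x 0) (x j) \<le> M" for j
  proof -
    let ?B = "\<rho> (x 0) (x j)"
    have "?B \<le> K * (\<rho> (x 0) (x k) + \<rho> (x k) (x (j+k)) + \<rho> (x (j+k)) (x j))"
      using tri3 xE by blast
    moreover have "\<rho> (x k) (x (j+k)) \<le> lam^k * ?B" using shift[of 0 k j] by simp
    moreover have "\<rho> (x (j+k)) (x j) \<le> C"
    proof -
      have "\<rho> (x (j+k)) (x j) = \<rho> (x (0 + j)) (x (k + j))" using sym xE by (simp add: add.commute)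
      also have "\<dots> \<le> lam^j * C" using shift[of k j 0] unfolding C_def
        by (metis add.commute shift)
      also have "\<dots> \<le> 1 * C" using C0 assms(4,5) by (intro mult_right_mono power_le_one) auto
      finally show ?thesis by simp
    qed
    ultimately have "?B \<le> K * (2 * C + lam^k * ?B)" using K1 unfolding C_def
      by (smt (verit, best) mult_left_mono)
    hence "(1 - K * lam^k) * ?B \<le> 2 * K * C" by (simp add: algebra_simps)
    moreover have "1 - K * lam^k > 0" using k by simp
    ultimately show ?thesis unfolding M_def by (simp add: pos_le_divide_eq mult.commute)
  qed
  have M0: "M \<ge> 0" using bound[of 0] nn xE by (meson order_trans)
  have gen: "\<rho> (x n) (x m) \<le> lam ^ (min n m) * M" for n m
  proof -
    have a: "\<rho> (x n) (x m) \<le> lam ^ n * M" if "n \<le> m" for n m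
    proof -
      have "\<rho> (x (0 + n)) (x ((m - n) + n)) \<le> lam ^ n * \<rho> (x 0) (x (m-n))" by (rule shift)
      also have "\<dots> \<le> lam ^ n * M" using bound assms(4) by (intro mult_left_mono) auto
      finally show ?thesis using that by simp
    qed
    show ?thesis
    proof (cases "n \<le> m")
      case True then show ?thesis using a by (simp add: min_def)
    next
      case False then show ?thesis using a[of m n] sym xE by (simp add: min_def)
    qed
  qed
  have lim0: "((\<lambda>(n, m). \<rho> (x n) (x m)) \<longlongrightarrow> 0) (sequentially \<times>\<^sub>F sequentially)"
  proof (rule tendstoI)
    fix e :: real assume e: "e > 0"
    have "(\<lambda>n. lam ^ n * M) \<longlonglongrightarrow> 0 * M" by (intro tendsto_mult lp tendsto_const)
    hence "eventually (\<lambda>n. lam ^ n * M < e) sequentially" using e by (intro order_tendstoD) auto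
    then obtain N where N: "lam ^ N * M < e" by (auto simp: eventually_sequentially)
    show "eventually (\<lambda>p. dist ((\<lambda>(n, m). \<rho> (x n) (x m)) p) 0 < e) (sequentially \<times>\<^sub>F sequentially)"
      unfolding eventually_prod_sequentially
    proof (intro exI allI impI)
      fix m n assume "m \<ge> N" "n \<ge> N"
      hence "lam ^ (min n m) \<le> lam ^ N" using assms(4,5) by (intro power_decreasing) auto
      hence "lam ^ (min n m) * M \<le> lam ^ N * M" using M0 by (intro mult_right_mono) auto
      moreover have "\<rho> (x n) (x m) \<ge> 0" using nn xE by auto
      ultimately show "dist ((\<lambda>(n, m). \<rho> (x n) (x m)) (n, m)) 0 < e" using gen[of n m] N by simp
    qed
  qed
  have "pbv_cauchy \<rho> x" unfolding pbv_cauchy_def using lim0 by blast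
  then obtain b where bE: "b \<in> E" and bl: "((\<lambda>(n, m). \<rho> (x n) (x m)) \<longlongrightarrow> \<rho> b b) (sequentially \<times>\<^sub>F sequentially)"
    and bc: "pbv_converges \<rho> x b" using assms(2) xE unfolding pbv_complete_def by blast
  have nb: "sequentially \<times>\<^sub>F sequentially \<noteq> (bot :: (nat \<times> nat) filter)" by (simp add: prod_filter_eq_bot)
  have bb: "\<rho> b b = 0" using tendsto_unique[OF nb bl lim0] .
  have xb: "(\<lambda>n. \<rho> (x n) b) \<longlonglongrightarrow> 0" using bc bb unfolding pbv_converges_def by simp
  have Sbb: "\<rho> (S b) b = 0"
  proof -
    have ub: "\<rho> (S b) b \<le> (s * v) * (lam * \<rho> (x n) b + \<rho> (x (Suc n)) b)" for n
    proof -
      have "\<rho> (S b) b \<le> (s * v) * (\<rho> (S b) (x (Suc n)) + \<rho> (x (Suc n)) b)"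
        using pbv_tri2[OF P SE[OF bE] xE bE] .
      moreover have "\<rho> (S b) (x (Suc n)) \<le> lam * \<rho> (x n) b"
        using con[OF bE xE, of n] sym[OF bE xE, of n] by (simp add: xS)
      moreover have "s * v \<ge> 0" using s1 by simp
      ultimately show ?thesis by (smt (verit, best) mult_left_mono)
    qed
    have "(\<lambda>n. (s * v) * (lam * \<rho> (x n) b + \<rho> (x (Suc n)) b)) \<longlonglongrightarrow> (s * v) * (lam * 0 + 0)"
      by (intro tendsto_intros xb LIMSEQ_Suc[OF xb])
    hence "\<rho> (S b) b \<le> 0"
      using ub by (intro tendsto_le[OF trivial_limit_sequentially, of _ _ "\<lambda>n. \<rho> (S b) b"]) auto
    thus ?thesis using nn[OF SE[OF bE] bE] by simp
  qed
  have Sb: "S b = b"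
  proof -
    have "\<rho> (S b) (S b) = 0" using sm[OF SE[OF bE] bE] Sbb nn[OF SE[OF bE] SE[OF bE]] by simp
    thus ?thesis using eqI[OF SE[OF bE] bE] Sbb bb by simp
  qed
  have uniq: "c = b" if cE: "c \<in> E" and Sc: "S c = c" for c
  proof -
    have "\<rho> b c \<le> lam * \<rho> b c" using con[OF bE cE] Sb Sc by simp
    hence bc0: "\<rho> b c = 0" using nn[OF bE cE] assms(5)
      by (smt (verit) mult_le_cancel_right1 mult_nonneg_nonneg)
    have "\<rho> c c = 0" using sm[OF cE bE] sym[OF bE cE] bc0 nn[OF cE cE] by simp
    thus ?thesis using eqI[OF bE cE] bb bc0 by simp
  qed
  show ?thesis using bE Sb bb uniq by blast
qed

end
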